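(* Let $i\in I$ and $k\in\mathbb{Z}$. \begin{enumerate} \item[(i)] Let $u\in\widehat{\mathcal{A}}_{[k+1]}$ be a homogeneous element with $e^\star_i(u)=0$. Then $f_{i,k}u=q^{-(\mathrm{wt}(f_{i,k}),\mathrm{wt}(u))}uf_{i,k}$. \item[(ii)] Let $v\in\widehat{\mathcal{A}}_{[k-1]}$ be a homogeneous element with $e'_i(v)=0$. Then $vf_{i,k}=q^{-(\mathrm{wt}(f_{i,k}),\mathrm{wt}(v))}f_{i,k}v$. \end{enumerate}
   Context: Let $\mathsf{C}=(c_{i,j})_{i,j\in I}$ be a finite-type Cartan matrix with simple roots $\alpha_i$, coroots $h_i$, symmetric form $(\alpha_i,\alpha_j)=\mathsf{d}_ic_{i,j}$ ($\min\mathsf{d}_i=1$), $q_i=q^{\mathsf{d}_i}$, $\mathbf{k}=\mathbb{Q}(q^{1/2})$. $\widehat{\mathcal{A}}$ is the bosonic extension generated by $f_{i,p}$ ($i\in I,p\in\mathbb{Z}$) with quantum Serre relations among $\{f_{i,p}\}_{i\in I}$ for fixed $p$, $f_{i,m}f_{j,p}=q_i^{(-1)^{p-m+1}c_{i,j}}f_{j,p}f_{i,m}$ ($p>m+1$), $f_{i,p}f_{j,p+1}=q_i^{c_{i,j}}f_{j,p+1}f_{i,p}+\delta_{i,j}(1-q_i^2)$, graded by $\mathrm{wt}(f_{i,p})=(-1)^{p+1}\alpha_i$. $\widehat{\mathcal{A}}_{[k]}$ is the subalgebra generated by $f_{i,k}$ ($i\in I$), identified with $\mathcal{U}_q^-(\mathfrak{g})$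 via $f_{i,k}\mapsto f_i$; through this, the $q$-derivations $e'_i,e^\star_i$ of $\mathcal{U}_q^-(\mathfrak{g})$ act on it, where $e'_i(f_j)=e^\star_i(f_j)=\delta_{i,j}$, $e'_i(xy)=e'_i(x)y+q_i^{\langle h_i,\mathrm{wt}(x)\rangle}xe'_i(y)$, $e^\star_i(xy)=xe^\star_i(y)+q_i^{\langle h_i,\mathrm{wt}(y)\rangle}e^\star_i(x)y$. *)

theory Defs
  imports Main "HOL-Computational_Algebra.Polynomial" "HOL-Computational_Algebra.Fraction_Field"
begin

type_synonym kfield = "rat poly fract"

text \<open>The indeterminate q^(1/2); q = qhalf^2.\<close>
definition qhalf :: kfield where "qhalf = Fract [:0, 1:] 1"

definition qpow :: "int \<Rightarrow> kfield" where "qpow n = qhalf powi (2 * n)"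

definition neg1pow :: "int \<Rightarrow> int" where "neg1pow n = (if even n then 1 else -1)"

definition qint :: "kfield \<Rightarrow> nat \<Rightarrow> kfield" where
  "qint x n = (x ^ n - inverse x ^ n) / (x - inverse x)"
definition qfact :: "kfield \<Rightarrow> nat \<Rightarrow> kfield" where
  "qfact x n = (\<Prod>m = 1..n. qint x m)"
definition qbinom :: "kfield \<Rightarrow> nat \<Rightarrow> nat \<Rightarrow> kfield" where
  "qbinom x n r = qfact x n / (qfact x r * qfact x (n - r))"

definition finite_type_cartan :: "('i::finite \<Rightarrow> 'i \<Rightarrow> int) \<Rightarrow> ('i \<Rightarrow> int) \<Rightarrow> bool" where
  "finite_type_cartan C d \<longleftrightarrow>
     (\<forall>i. C i i = 2) \<and> (\<forall>i j. i \<noteq> j \<longrightarrow> C i j \<le> 0) \<and>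
     (\<forall>i. d i \<ge> 1) \<and> (\<exists>i. d i = 1) \<and>
     (\<forall>i j. d i * C i j = d j * C j i) \<and>
     (\<forall>x :: 'i \<Rightarrow> real. x \<noteq> (\<lambda>_. 0) \<longrightarrow>
        (\<Sum>a\<in>UNIV. \<Sum>b\<in>UNIV. x a * real_of_int (d a * C a b) * x b) > 0)"

text \<open>Weights are elements of the root lattice, written in the basis of simple roots.
  The symmetric form: (alpha_a, alpha_b) = d_a c_ab.\<close>
definition bil :: "('i::finite \<Rightarrow> 'i \<Rightarrow> int) \<Rightarrow> ('i \<Rightarrow> int) \<Rightarrow> ('i \<Rightarrow> int) \<Rightarrow> ('i \<Rightarrow> int) \<Rightarrow> int" where
  "bil C d la mu = (\<Sum>a\<in>UNIV. \<Sum>b\<in>UNIV. la a * mu b * d a * C a b)"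

definition simple_root :: "'i \<Rightarrow> 'i \<Rightarrow> int" where
  "simple_root i = (\<lambda>a. if a = i then 1 else 0)"

definition word_content :: "'i list \<Rightarrow> 'i \<Rightarrow> int" where
  "word_content w = (\<lambda>a. int (count_list w a))"

type_synonym 'a ncpoly = "'a list \<Rightarrow> kfield"

definition fin_supp :: "'a ncpoly \<Rightarrow> bool" where
  "fin_supp P \<longleftrightarrow> finite {w. P w \<noteq> 0}"

definition ncmul :: "'a ncpoly \<Rightarrow> 'a ncpoly \<Rightarrow> 'a ncpoly" where
  "ncmul P Q = (\<lambda>w. \<Sum>n\<le>length w. P (take n w) * Q (drop n w))"

definition ncadd :: "'a ncpoly \<Rightarrow> 'a ncpoly \<Rightarrow> 'a ncpoly" where
  "ncadd P Q = (\<lambda>w. P w + Q w)"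

definition ncsmult :: "kfield \<Rightarrow> 'a ncpoly \<Rightarrow> 'a ncpoly" where
  "ncsmult c P = (\<lambda>w. c * P w)"

definition ncdiff :: "'a ncpoly \<Rightarrow> 'a ncpoly \<Rightarrow> 'a ncpoly" where
  "ncdiff P Q = (\<lambda>w. P w - Q w)"

definition ncone :: "'a ncpoly" where
  "ncone = (\<lambda>w. if w = [] then 1 else 0)"

definition letter :: "'a \<Rightarrow> 'a ncpoly" where
  "letter x = (\<lambda>w. if w = [x] then 1 else 0)"

inductive_set ideal_gen :: "'a ncpoly set \<Rightarrow> 'a ncpoly set" for G where
  zero: "(\<lambda>_. 0) \<in> ideal_gen G"
| gen: "g \<in> G \<Longrightarrow> g \<in> ideal_gen G"
| add: "a \<in> ideal_gen G \<Longrightarrow> b \<in> ideal_gen G \<Longrightarrow> ncadd a b \<in> ideal_gen G"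
| left: "a \<in> ideal_gen G \<Longrightarrow> fin_supp p \<Longrightarrow> ncmul p a \<in> ideal_gen G"
| right: "a \<in> ideal_gen G \<Longrightarrow> fin_supp p \<Longrightarrow> ncmul a p \<in> ideal_gen G"

definition homog_content :: "'i ncpoly \<Rightarrow> ('i \<Rightarrow> int) \<Rightarrow> bool" where
  "homog_content P \<beta> \<longleftrightarrow> (\<forall>w. P w \<noteq> 0 \<longrightarrow> word_content w = \<beta>)"

section \<open>U_q^-(g): free algebra on I modulo quantum Serre relations\<close>

definition serre_el :: "('i \<Rightarrow> 'i \<Rightarrow> int) \<Rightarrow> ('i \<Rightarrow> int) \<Rightarrow> 'i \<Rightarrow> 'i \<Rightarrow> 'a \<Rightarrow> 'a \<Rightarrow> 'a ncpoly" where
  "serre_el C d i j x y = (let n = nat (1 - C i j) in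
     (\<lambda>w. \<Sum>r\<le>n. if w = replicate (n - r) x @ y # replicate r x
                  then (-1) ^ r * qbinom (qpow (d i)) n r else 0))"

definition serre_ideal :: "('i \<Rightarrow> 'i \<Rightarrow> int) \<Rightarrow> ('i \<Rightarrow> int) \<Rightarrow> 'i ncpoly set" where
  "serre_ideal C d = ideal_gen {serre_el C d i j i j | i j. i \<noteq> j}"

text \<open>The q-derivations e'_i and e*_i, lifted to the free algebra (they preserve the Serre ideal).
  Convention of U_q^-: wt(f_j) = -alpha_j, so <h_i, wt(f_j)> = -c_ij.
  e'_i(xy) = e'_i(x) y + q_i^{<h_i,wt x>} x e'_i(y): deleting an occurrence of i
  contributes q_i^{<h_i, wt(letters before it)>}.
  e*_i(xy) = x e*_i(y) + q_i^{<h_i,wt y>} e*_i(x) y: deleting an occurrence of i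
  contributes q_i^{<h_i, wt(letters after it)>}.\<close>
definition eprime :: "('i \<Rightarrow> 'i \<Rightarrow> int) \<Rightarrow> ('i \<Rightarrow> int) \<Rightarrow> 'i \<Rightarrow> 'i ncpoly \<Rightarrow> 'i ncpoly" where
  "eprime C d i P = (\<lambda>v. \<Sum>s\<le>length v.
      P (take s v @ i # drop s v) * qpow (d i * (- sum_list (map (C i) (take s v)))))"

definition estar :: "('i \<Rightarrow> 'i \<Rightarrow> int) \<Rightarrow> ('i \<Rightarrow> int) \<Rightarrow> 'i \<Rightarrow> 'i ncpoly \<Rightarrow> 'i ncpoly" where
  "estar C d i P = (\<lambda>v. \<Sum>s\<le>length v.
      P (take s v @ i # drop s v) * qpow (d i * (- sum_list (map (C i) (drop s v)))))"

section \<open>The bosonic extension: free algebra on I x Z modulo the defining relations\<close>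

definition boson_rel_serre :: "('i \<Rightarrow> 'i \<Rightarrow> int) \<Rightarrow> ('i \<Rightarrow> int) \<Rightarrow> ('i \<times> int) ncpoly set" where
  "boson_rel_serre C d = {serre_el C d i j (i, p) (j, p) | i j p. i \<noteq> j}"

definition boson_rel_far :: "('i \<Rightarrow> 'i \<Rightarrow> int) \<Rightarrow> ('i \<Rightarrow> int) \<Rightarrow> ('i \<times> int) ncpoly set" where
  "boson_rel_far C d = {ncdiff (ncmul (letter (i, m)) (letter (j, p)))
       (ncsmult (qpow (d i * (neg1pow (p - m + 1) * C i j))) (ncmul (letter (j, p)) (letter (i, m))))
     | i j m p. p > m + 1}"

definition boson_rel_adj :: "('i \<Rightarrow> 'i \<Rightarrow> int) \<Rightarrow> ('i \<Rightarrow> int) \<Rightarrow> ('i \<times> int) ncpoly set" where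
  "boson_rel_adj C d = {ncdiff (ncdiff (ncmul (letter (i, p)) (letter (j, p + 1)))
       (ncsmult (qpow (d i * C i j)) (ncmul (letter (j, p + 1)) (letter (i, p)))))
       (ncsmult (if i = j then 1 - qpow (2 * d i) else 0) ncone)
     | i j p. True}"

definition boson_ideal :: "('i \<Rightarrow> 'i \<Rightarrow> int) \<Rightarrow> ('i \<Rightarrow> int) \<Rightarrow> ('i \<times> int) ncpoly set" where
  "boson_ideal C d = ideal_gen (boson_rel_serre C d \<union> boson_rel_far C d \<union> boson_rel_adj C d)"

definition boson_eq :: "('i \<Rightarrow> 'i \<Rightarrow> int) \<Rightarrow> ('i \<Rightarrow> int) \<Rightarrow> ('i \<times> int) ncpoly \<Rightarrow> ('i \<times> int) ncpoly \<Rightarrow> bool" where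
  "boson_eq C d P Q \<longleftrightarrow> ncdiff P Q \<in> boson_ideal C d"

text \<open>The algebra map U_q^- -> A_[k], f_i |-> f_{i,k}, on representatives.\<close>
definition emb :: "int \<Rightarrow> 'i ncpoly \<Rightarrow> ('i \<times> int) ncpoly" where
  "emb k P = (\<lambda>w. if (\<forall>x\<in>set w. snd x = k) then P (map fst w) else 0)"

text \<open>Weight grading of the bosonic extension: wt(f_{i,p}) = (-1)^{p+1} alpha_i.
  An element of A_[p] of Q_+-content beta has weight (-1)^{p+1} beta.\<close>
definition wt_layer :: "int \<Rightarrow> ('i \<Rightarrow> int) \<Rightarrow> ('i \<Rightarrow> int)" where
  "wt_layer p \<beta> = (\<lambda>a. neg1pow (p + 1) * \<beta> a)"

end

theory Submission
  imports Defs
begin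


lemma sum_atMost_Suc_shift0: "(\<Sum>n\<le>Suc m. f n) = f 0 + (\<Sum>n\<le>m. f (Suc n))"
  by (rule sum.atMost_Suc_shift)

lemma ncmul_letter_left_Nil: "ncmul (letter a) P [] = 0"
  by (simp add: ncmul_def letter_def)

lemma ncmul_letter_left_Cons: "ncmul (letter a) P (b # w) = (if b = a then P w else 0)"
proof -
  have "ncmul (letter a) P (b # w) = (\<Sum>n\<le>Suc (length w). letter a (take n (b#w)) * P (drop n (b#w)))"
    by (simp add: ncmul_def)
  also have "\<dots> = (\<Sum>n\<le>length w. letter a (b # take n w) * P (drop n w))"
    by (subst sum.atMost_Suc_shift) (simp add: letter_def)
  also have "\<dots> = (\<Sum>n\<le>length w. if n = 0 then (if b = a then P w else 0) else 0)"
    by (rule sum.cong) (auto simp: letter_def)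
  finally show ?thesis by simp
qed

lemma ncmul_letter_right_Nil: "ncmul P (letter a) [] = 0"
  by (simp add: ncmul_def letter_def)

lemma ncmul_letter_right_snoc: "ncmul P (letter a) (w @ [b]) = (if b = a then P w else 0)"
proof -
  have "ncmul P (letter a) (w @ [b]) = (\<Sum>n\<le>Suc (length w). P (take n (w@[b])) * letter a (drop n (w@[b])))"
    by (simp add: ncmul_def)
  also have "\<dots> = (\<Sum>n\<le>length w. P (take n w) * letter a (drop n w @ [b]))"
    by (subst sum.atMost_Suc) (simp add: letter_def)
  also have "\<dots> = (\<Sum>n\<le>length w. if n = length w then (if b = a then P w else 0) else 0)"
    by (rule sum.cong) (auto simp: letter_def)
  finally show ?thesis by simp
qed

lemma ncmul_assoc_letter_left:
  "ncmul (ncmul (letter a) Q) R = ncmul (letter a) (ncmul Q R)"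
proof (rule ext)
  fix w
  show "ncmul (ncmul (letter a) Q) R w = ncmul (letter a) (ncmul Q R) w"
  proof (cases w)
    case Nil thus ?thesis by (simp add: ncmul_def letter_def)
  next
    case (Cons b w')
    have "ncmul (ncmul (letter a) Q) R w = (\<Sum>n\<le>Suc (length w'). ncmul (letter a) Q (take n (b#w')) * R (drop n (b#w')))"
      by (simp add: Cons ncmul_def[of "ncmul (letter a) Q"])
    also have "\<dots> = (\<Sum>n\<le>length w'. (if b = a then Q (take n w') else 0) * R (drop n w'))"
      by (subst sum.atMost_Suc_shift) (simp only: take_Suc_Cons drop_Suc_Cons take_0 ncmul_letter_left_Nil ncmul_letter_left_Cons mult_zero_left add_0)
    also have "\<dots> = ncmul (letter a) (ncmul Q R) w"
      unfolding Cons ncmul_letter_left_Cons by (cases "b = a") (simp_all add: ncmul_def)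
    finally show ?thesis .
  qed
qed

lemma ncmul_assoc_letter_right:
  "ncmul P (ncmul Q (letter a)) = ncmul (ncmul P Q) (letter a)"
proof (rule ext)
  fix w
  show "ncmul P (ncmul Q (letter a)) w = ncmul (ncmul P Q) (letter a) w"
  proof (cases w rule: rev_cases)
    case Nil thus ?thesis by (simp add: ncmul_def letter_def)
  next
    case (snoc w' b)
    have "ncmul P (ncmul Q (letter a)) w = (\<Sum>n\<le>Suc (length w'). P (take n (w'@[b])) * ncmul Q (letter a) (drop n (w'@[b])))"
      by (simp add: snoc ncmul_def[of P])
    also have "\<dots> = (\<Sum>n\<le>length w'. P (take n w') * ncmul Q (letter a) (drop n w' @ [b]))"
      by (subst sum.atMost_Suc) (simp add: ncmul_letter_right_Nil)
    also have "\<dots> = (\<Sum>n\<le>length w'. P (take n w') * (if b = a then Q (drop n w') else 0))"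
      by (simp only: ncmul_letter_right_snoc)
    also have "\<dots> = ncmul (ncmul P Q) (letter a) w"
      unfolding snoc ncmul_letter_right_snoc by (simp add: ncmul_def)
    finally show ?thesis .
  qed
qed

lemma ncmul_add_left: "ncmul (ncadd P Q) R = ncadd (ncmul P R) (ncmul Q R)"
  by (simp add: ncmul_def ncadd_def distrib_right sum.distrib fun_eq_iff)
lemma ncmul_add_right: "ncmul R (ncadd P Q) = ncadd (ncmul R P) (ncmul R Q)"
  by (simp add: ncmul_def ncadd_def distrib_left sum.distrib fun_eq_iff)
lemma ncmul_diff_left: "ncmul (ncdiff P Q) R = ncdiff (ncmul P R) (ncmul Q R)"
  by (simp add: ncmul_def ncdiff_def left_diff_distrib sum_subtractf fun_eq_iff)
lemma ncmul_diff_right: "ncmul R (ncdiff P Q) = ncdiff (ncmul R P) (ncmul R Q)"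
  by (simp add: ncmul_def ncdiff_def right_diff_distrib sum_subtractf fun_eq_iff)
lemma ncmul_smult_left: "ncmul (ncsmult c P) R = ncsmult c (ncmul P R)"
  by (simp add: ncmul_def ncsmult_def sum_distrib_left mult.assoc fun_eq_iff)
lemma ncmul_smult_right: "ncmul R (ncsmult c P) = ncsmult c (ncmul R P)"
  by (simp add: ncmul_def ncsmult_def sum_distrib_left mult.left_commute fun_eq_iff)
lemma ncmul_one_left: "ncmul ncone P = P"
proof (rule ext)
  fix w
  have "ncmul ncone P w = (\<Sum>n\<le>length w. if n = 0 then P w else 0)"
    unfolding ncmul_def by (rule sum.cong) (auto simp: ncone_def)
  thus "ncmul ncone P w = P w" by simp
qed
lemma ncmul_sum_left: "ncmul (\<lambda>x. \<Sum>w\<in>S. g w x) R = (\<lambda>x. \<Sum>w\<in>S. ncmul (g w) R x)"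
  by (simp add: ncmul_def sum_distrib_right fun_eq_iff sum.swap[of _ S])
lemma ncmul_sum_right: "ncmul R (\<lambda>x. \<Sum>w\<in>S. g w x) = (\<lambda>x. \<Sum>w\<in>S. ncmul R (g w) x)"
  by (simp add: ncmul_def sum_distrib_left fun_eq_iff sum.swap[of _ S])

lemma fin_supp_letter: "fin_supp (letter a)"
proof -
  have "{w. letter a w \<noteq> 0} \<subseteq> {[a]}" by (auto simp: letter_def)
  thus ?thesis unfolding fin_supp_def using finite_subset by blast
qed

lemma fin_supp_smult_one: "fin_supp (ncsmult c ncone)"
proof -
  have "{w. ncsmult c ncone w \<noteq> 0} \<subseteq> {[]}" by (auto simp: ncsmult_def ncone_def)
  thus ?thesis unfolding fin_supp_def using finite_subset by blast
qed

lemma ideal_smult: "a \<in> ideal_gen G \<Longrightarrow> ncsmult c a \<in> ideal_gen G"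
proof -
  assume "a \<in> ideal_gen G"
  hence "ncmul (ncsmult c ncone) a \<in> ideal_gen G" using fin_supp_smult_one by (rule ideal_gen.left)
  thus ?thesis by (simp add: ncmul_smult_left ncmul_one_left)
qed

lemma ideal_diff: "a \<in> ideal_gen G \<Longrightarrow> b \<in> ideal_gen G \<Longrightarrow> ncdiff a b \<in> ideal_gen G"
proof -
  assume "a \<in> ideal_gen G" "b \<in> ideal_gen G"
  hence "ncadd a (ncsmult (-1) b) \<in> ideal_gen G" by (intro ideal_gen.add ideal_smult)
  moreover have "ncadd a (ncsmult (-1) b) = ncdiff a b" by (simp add: ncadd_def ncsmult_def ncdiff_def fun_eq_iff)
  ultimately show ?thesis by simp
qed

lemma ideal_sum: "finite S \<Longrightarrow> (\<And>w. w \<in> S \<Longrightarrow> g w \<in> ideal_gen G) \<Longrightarrow> (\<lambda>x. \<Sum>w\<in>S. c w * g w x) \<in> ideal_gen G"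
proof (induction S rule: finite_induct)
  case empty thus ?case by (simp add: ideal_gen.zero)
  next
  case (insert a S)
  have "ncadd (ncsmult (c a) (g a)) (\<lambda>x. \<Sum>w\<in>S. c w * g w x) \<in> ideal_gen G"
    using insert by (intro ideal_gen.add ideal_smult) auto
  moreover have "ncadd (ncsmult (c a) (g a)) (\<lambda>x. \<Sum>w\<in>S. c w * g w x) = (\<lambda>x. \<Sum>w\<in>insert a S. c w * g w x)"
    using insert by (simp add: ncadd_def ncsmult_def fun_eq_iff)
  ultimately show ?case by simp
qed



definition ncmono :: "'a list \<Rightarrow> 'a ncpoly" where "ncmono w = (\<lambda>v. if v = w then 1 else 0)"

lemma ncmono_Nil: "ncmono [] = ncone"
  by (simp add: ncmono_def ncone_def)

lemma ncmono_Cons: "ncmono (j # w) = ncmul (letter j) (ncmono w)"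
proof (rule ext)
  fix v show "ncmono (j # w) v = ncmul (letter j) (ncmono w) v"
    by (cases v) (auto simp: ncmul_letter_left_Nil ncmul_letter_left_Cons ncmono_def)
qed

lemma ncmono_snoc: "ncmono (w @ [j]) = ncmul (ncmono w) (letter j)"
proof (rule ext)
  fix v show "ncmono (w @ [j]) v = ncmul (ncmono w) (letter j) v"
    by (cases v rule: rev_cases) (auto simp: ncmul_letter_right_Nil ncmul_letter_right_snoc ncmono_def)
qed

lemma fin_supp_ncmono: "fin_supp (ncmono w)"
proof -
  have "{v. ncmono w v \<noteq> 0} \<subseteq> {w}" by (auto simp: ncmono_def)
  thus ?thesis unfolding fin_supp_def using finite_subset by blast
qed

lemma emb_mul: "emb k (ncmul P Q) = ncmul (emb k P) (emb k Q)"
proof (rule ext)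
  fix x :: "('a \<times> int) list"
  show "emb k (ncmul P Q) x = ncmul (emb k P) (emb k Q) x"
  proof (cases "\<forall>y\<in>set x. snd y = k")
    case True
    have "ncmul (emb k P) (emb k Q) x = (\<Sum>n\<le>length x. P (take n (map fst x)) * Q (drop n (map fst x)))"
      unfolding ncmul_def emb_def
      using True by (intro sum.cong refl) (auto simp: take_map drop_map dest: in_set_takeD in_set_dropD)
    thus ?thesis using True by (simp add: emb_def ncmul_def)
  next
    case False
    then obtain y where y: "y \<in> set x" "snd y \<noteq> k" by blast
    have "ncmul (emb k P) (emb k Q) x = (\<Sum>n\<le>length x. 0)"
      unfolding ncmul_def
    proof (intro sum.cong refl)
      fix n
      have "y \<in> set (take n x) \<or> y \<in> set (drop n x)"
        using y(1) by (metis Un_iff append_take_drop_id set_append)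
      thus "emb k P (take n x) * emb k Q (drop n x) = 0"
        using y(2) by (auto simp: emb_def)
    qed
    moreover have "emb k (ncmul P Q) x = 0" using False unfolding emb_def by auto
    ultimately show ?thesis by simp
  qed
qed

lemma emb_letter: "emb k (letter j) = letter (j, k)"
  by (auto simp: emb_def letter_def fun_eq_iff)

lemma emb_one: "emb k ncone = ncone"
  by (auto simp: emb_def ncone_def fun_eq_iff)

lemma emb_add: "emb k (ncadd P Q) = ncadd (emb k P) (emb k Q)"
  by (auto simp: emb_def ncadd_def fun_eq_iff)
lemma emb_smult: "emb k (ncsmult c P) = ncsmult c (emb k P)"
  by (auto simp: emb_def ncsmult_def fun_eq_iff)
lemma emb_diff: "emb k (ncdiff P Q) = ncdiff (emb k P) (emb k Q)"
  by (auto simp: emb_def ncdiff_def fun_eq_iff)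

lemma fin_supp_emb: "fin_supp P \<Longrightarrow> fin_supp (emb k P)"
proof -
  assume "fin_supp P"
  have "{x. emb k P x \<noteq> 0} \<subseteq> map (\<lambda>a. (a, k)) ` {w. P w \<noteq> 0}"
  proof
    fix x assume "x \<in> {x. emb k P x \<noteq> 0}"
    hence all: "\<forall>y\<in>set x. snd y = k" and nz: "P (map fst x) \<noteq> 0"
      by (auto simp: emb_def split: if_splits)
    have "x = map (\<lambda>a. (a, k)) (map fst x)"
      using all by (induction x) auto
    thus "x \<in> map (\<lambda>a. (a, k)) ` {w. P w \<noteq> 0}" using nz by blast
  qed
  thus ?thesis using \<open>fin_supp P\<close> unfolding fin_supp_def by (meson finite_imageI finite_subset)
qed

lemma map_level_iff:
  "(x = map (\<lambda>a. (a, k)) z) \<longleftrightarrow> (\<forall>y\<in>set x. snd y = k) \<and> map fst x = z"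
proof
  assume "x = map (\<lambda>a. (a, k)) z" thus "(\<forall>y\<in>set x. snd y = k) \<and> map fst x = z" by (auto simp: comp_def)
next
  assume h: "(\<forall>y\<in>set x. snd y = k) \<and> map fst x = z"
  have all: "\<forall>y\<in>set x. snd y = k" using h by simp
  hence "x = map (\<lambda>a. (a, k)) (map fst x)" by (induction x) auto
  thus "x = map (\<lambda>a. (a, k)) z" using h by simp
qed

lemma emb_serre: "emb k (serre_el C d i j i j) = serre_el C d i j (i, k) (j, k)"
proof (rule ext)
  fix x :: "('a \<times> int) list"
  have e: "\<And>n r. replicate (n - r) (i, k) @ (j, k) # replicate r (i, k) = map (\<lambda>a. (a, k)) (replicate (n - r) i @ j # replicate r i)"
    by (simp add: map_replicate)
  show "emb k (serre_el C d i j i j) x = serre_el C d i j (i, k) (j, k) x"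
    proof (cases "\<forall>y\<in>set x. snd y = k")
      case False
      hence F: "(\<forall>y\<in>set x. snd y = k) \<longleftrightarrow> False" by simp
      show ?thesis unfolding emb_def serre_el_def Let_def e map_level_iff by (simp only: F if_False simp_thms mult_zero_right sum.neutral_const)
    next
      case True
      hence F: "(\<forall>y\<in>set x. snd y = k) \<longleftrightarrow> True" by simp
      show ?thesis unfolding emb_def serre_el_def Let_def e map_level_iff by (simp only: F if_True simp_thms)
    qed
qed

lemma emb_ideal:
  assumes "P \<in> serre_ideal C d"
  shows "emb k P \<in> boson_ideal C d"
  using assms unfolding serre_ideal_def
proof (induction rule: ideal_gen.induct)
  case zero
  show ?case unfolding boson_ideal_def by (simp add: emb_def ideal_gen.zero)
next
  case (gen g)
  then obtain i j where "g = serre_el C d i j i j" "i \<noteq> j" by blast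
  hence "emb k g \<in> boson_rel_serre C d" by (auto simp: emb_serre boson_rel_serre_def)
  thus ?case unfolding boson_ideal_def by (blast intro: ideal_gen.gen)
next
  case (add a b)
  thus ?case by (simp add: emb_add boson_ideal_def ideal_gen.add)
next
  case (left a p)
  thus ?case by (simp add: emb_mul boson_ideal_def ideal_gen.left fin_supp_emb)
next
  case (right a p)
  thus ?case by (simp add: emb_mul boson_ideal_def ideal_gen.right fin_supp_emb)
qed

lemma decomp:
  assumes "finite S" "{w. u w \<noteq> 0} \<subseteq> S"
  shows "u = (\<lambda>x. \<Sum>w\<in>S. u w * ncmono w x)"
proof (rule ext)
  fix x
  have "(\<Sum>w\<in>S. u w * ncmono w x) = (\<Sum>w\<in>S. if w = x then u x else 0)"
    by (rule sum.cong) (auto simp: ncmono_def)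
  also have "\<dots> = u x" using assms by auto
  finally show "u x = (\<Sum>w\<in>S. u w * ncmono w x)" by simp
qed

lemma emb_sum: "emb k (\<lambda>x. \<Sum>w\<in>S. c w * P w x) = (\<lambda>x. \<Sum>w\<in>S. c w * emb k (P w) x)"
proof (rule ext)
  fix x :: "('a \<times> int) list"
  show "emb k (\<lambda>x. \<Sum>w\<in>S. c w * P w x) x = (\<Sum>w\<in>S. c w * emb k (P w) x)"
    proof (cases "\<forall>y\<in>set x. snd y = k")
      case False
      hence F: "(\<forall>y\<in>set x. snd y = k) \<longleftrightarrow> False" by simp
      show ?thesis unfolding emb_def by (simp only: F if_False simp_thms mult_zero_right sum.neutral_const)
    qed (simp add: emb_def)
qed

definition Dgen :: "('a list \<Rightarrow> nat \<Rightarrow> kfield) \<Rightarrow> 'a \<Rightarrow> 'a ncpoly \<Rightarrow> 'a ncpoly" where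
  "Dgen g i P = (\<lambda>v. \<Sum>s\<le>length v. P (take s v @ i # drop s v) * g v s)"

lemma Dgen_sum: "Dgen g i (\<lambda>x. \<Sum>w\<in>S. c w * P w x) = (\<lambda>v. \<Sum>w\<in>S. c w * Dgen g i (P w) v)"
  by (simp add: Dgen_def fun_eq_iff sum_distrib_left sum_distrib_right sum.swap[of _ S] mult.assoc)

lemma Dgen_smult: "Dgen g i (ncsmult c P) = ncsmult c (Dgen g i P)"
  by (simp add: Dgen_def fun_eq_iff sum_distrib_left ncsmult_def mult.assoc)



lemma qhalf_nz: "qhalf \<noteq> 0"
  unfolding qhalf_def by (simp add: Zero_fract_def eq_fract)

lemma qpow_add: "qpow (a + b) = qpow a * qpow b"
  unfolding qpow_def using qhalf_nz by (simp add: distrib_left power_int_add)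

lemma qpow_0[simp]: "qpow 0 = 1"
  unfolding qpow_def by simp

lemma D1_Cons:
  fixes C :: "'i \<Rightarrow> 'i \<Rightarrow> int" and d :: "'i \<Rightarrow> int" and i :: 'i
  defines "g \<equiv> (\<lambda>v s. qpow (d i * sum_list (map (C i) (take s v))))"
  shows "Dgen g i (ncmono (j # w)) =
    ncadd (if i = j then ncmono w else (\<lambda>_. 0)) (ncsmult (qpow (d i * C i j)) (ncmul (letter j) (Dgen g i (ncmono w))))"
proof (rule ext)
  fix v
  show "Dgen g i (ncmono (j # w)) v = ncadd (if i = j then ncmono w else (\<lambda>_. 0)) (ncsmult (qpow (d i * C i j)) (ncmul (letter j) (Dgen g i (ncmono w)))) v"
  proof (cases v)
    case Nil
    thus ?thesis by (simp add: Dgen_def g_def ncadd_def ncsmult_def ncmul_letter_left_Nil ncmono_def)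
  next
    case (Cons a v')
    have "Dgen g i (ncmono (j # w)) v = ncmono (j # w) (i # a # v') +
       (\<Sum>s\<le>length v'. ncmono (j # w) (a # (take s v' @ i # drop s v')) * qpow (d i * C i a + d i * sum_list (map (C i) (take s v'))))"
      unfolding Dgen_def Cons g_def length_Cons by (subst sum.atMost_Suc_shift) (simp add: distrib_left)
    also have "\<dots> = (if i = j then ncmono w (a # v') else 0) +
       (if a = j then qpow (d i * C i j) * (\<Sum>s\<le>length v'. ncmono w (take s v' @ i # drop s v') * qpow (d i * sum_list (map (C i) (take s v')))) else 0)"
      by (auto simp: ncmono_def sum_distrib_left qpow_add intro!: sum.cong)
    also have "\<dots> = ncadd (if i = j then ncmono w else (\<lambda>_. 0)) (ncsmult (qpow (d i * C i j)) (ncmul (letter j) (Dgen g i (ncmono w)))) v"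
      by (simp add: Cons ncadd_def ncsmult_def ncmul_letter_left_Cons Dgen_def g_def)
    finally show ?thesis .
  qed
qed

lemma D2_snoc:
  fixes C :: "'i \<Rightarrow> 'i \<Rightarrow> int" and d :: "'i \<Rightarrow> int" and i :: 'i
  defines "g \<equiv> (\<lambda>v s. qpow (d i * sum_list (map (C i) (drop s v))))"
  shows "Dgen g i (ncmono (w @ [j])) =
    ncadd (if i = j then ncmono w else (\<lambda>_. 0)) (ncsmult (qpow (d i * C i j)) (ncmul (Dgen g i (ncmono w)) (letter j)))"
proof (rule ext)
  fix v
  show "Dgen g i (ncmono (w @ [j])) v = ncadd (if i = j then ncmono w else (\<lambda>_. 0)) (ncsmult (qpow (d i * C i j)) (ncmul (Dgen g i (ncmono w)) (letter j))) v"
  proof (cases v rule: rev_cases)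
    case Nil
    thus ?thesis by (simp add: Dgen_def g_def ncadd_def ncsmult_def ncmul_letter_right_Nil ncmono_def)
  next
    case (snoc v' a)
    have "Dgen g i (ncmono (w @ [j])) v = 
       (\<Sum>s\<le>length v'. ncmono (w @ [j]) ((take s v' @ i # drop s v') @ [a]) * qpow (d i * C i a + d i * sum_list (map (C i) (drop s v')))) +
       ncmono (w @ [j]) (v' @ [a, i])"
      unfolding Dgen_def snoc g_def length_append_singleton
      by (subst sum.atMost_Suc) (auto simp: distrib_left add.commute intro!: sum.cong)
    also have "\<dots> = (if i = j then ncmono w (v' @ [a]) else 0) +
       (if a = j then qpow (d i * C i j) * (\<Sum>s\<le>length v'. ncmono w (take s v' @ i # drop s v') * qpow (d i * sum_list (map (C i) (drop s v')))) else 0)"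
      by (auto simp: ncmono_def sum_distrib_left qpow_add intro!: sum.cong)
    also have "\<dots> = ncadd (if i = j then ncmono w else (\<lambda>_. 0)) (ncsmult (qpow (d i * C i j)) (ncmul (Dgen g i (ncmono w)) (letter j))) v"
      by (simp add: snoc ncadd_def ncsmult_def ncmul_letter_right_snoc Dgen_def g_def)
    finally show ?thesis .
  qed
qed



lemma ncmul_one_right: "ncmul P ncone = P"
proof (rule ext)
  fix w
  have "ncmul P ncone w = (\<Sum>n\<le>length w. if n = length w then P w else 0)"
    unfolding ncmul_def by (rule sum.cong) (auto simp: ncone_def)
  thus "ncmul P ncone w = P w" by simp
qed

lemma emb_zero: "emb k (\<lambda>_. 0) = (\<lambda>_. 0)"
  by (simp add: emb_def fun_eq_iff)

lemma Dgen_Nil: "Dgen g i (ncmono []) = (\<lambda>_. 0)"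
  by (simp add: Dgen_def ncmono_def fun_eq_iff)

lemma Dgen_one: "Dgen g i ncone = (\<lambda>_. 0)"
  by (simp add: Dgen_def ncone_def fun_eq_iff)

lemma ideal_zero': "P = (\<lambda>_. 0) \<Longrightarrow> P \<in> ideal_gen G"
  by (simp add: ideal_gen.zero)

lemma word_i:
  fixes C :: "'i \<Rightarrow> 'i \<Rightarrow> int" and d :: "'i \<Rightarrow> int" and i :: 'i
  defines "g \<equiv> (\<lambda>v s. qpow (d i * sum_list (map (C i) (take s v))))"
  shows "ncdiff (ncdiff (ncmul (letter (i, k)) (emb (k+1) (ncmono w)))
            (ncsmult (qpow (d i * sum_list (map (C i) w))) (ncmul (emb (k+1) (ncmono w)) (letter (i, k)))))
          (ncsmult (1 - qpow (2 * d i)) (emb (k+1) (Dgen g i (ncmono w)))) \<in> boson_ideal C d"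
proof (induction w)
  case Nil
  show ?case unfolding boson_ideal_def
    by (rule ideal_zero') (simp add: ncmono_Nil emb_one Dgen_one emb_zero ncmul_one_left ncmul_one_right ncdiff_def ncsmult_def fun_eq_iff)
next
  case (Cons j w)
  define F where "F = letter (i, k)"
  define X where "X = letter (j, k+1)"
  define B where "B = emb (k+1) (ncmono w)"
  define E where "E = emb (k+1) (Dgen g i (ncmono w))"
  define c where "c = qpow (d i * C i j)"
  define e where "e = qpow (d i * sum_list (map (C i) w))"
  define \<gamma> where "\<gamma> = 1 - qpow (2 * d i)"
  define rel where "rel = ncdiff (ncdiff (ncmul F X) (ncsmult c (ncmul X F))) (ncsmult (if i = j then \<gamma> else 0) ncone)"
  have rel: "rel \<in> boson_ideal C d"
  proof -
    have "rel \<in> boson_rel_adj C d" unfolding rel_def boson_rel_adj_def F_def X_def c_def \<gamma>_def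
      by (cases "i = j") blast+
    thus ?thesis unfolding boson_ideal_def by (blast intro: ideal_gen.gen)
  qed
  have IH: "ncdiff (ncdiff (ncmul F B) (ncsmult e (ncmul B F))) (ncsmult \<gamma> E) \<in> boson_ideal C d"
    using Cons.IH unfolding F_def B_def e_def \<gamma>_def E_def .
  have fB: "fin_supp B" unfolding B_def by (intro fin_supp_emb fin_supp_ncmono)
  have m1: "ncmul rel B \<in> boson_ideal C d"
    using rel fB unfolding boson_ideal_def by (rule ideal_gen.right)
  have m2: "ncsmult c (ncmul X (ncdiff (ncdiff (ncmul F B) (ncsmult e (ncmul B F))) (ncsmult \<gamma> E))) \<in> boson_ideal C d"
    using IH fin_supp_letter unfolding boson_ideal_def X_def by (intro ideal_smult ideal_gen.left)
  have Bc: "emb (k+1) (ncmono (j # w)) = ncmul X B"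
    unfolding B_def X_def by (simp add: ncmono_Cons emb_mul emb_letter)
  have Ec: "emb (k+1) (Dgen g i (ncmono (j # w))) = ncadd (if i = j then B else (\<lambda>_. 0)) (ncsmult c (ncmul X E))"
    unfolding B_def X_def E_def c_def g_def D1_Cons
    by (cases "i = j") (simp_all add: emb_add emb_smult emb_mul emb_letter emb_zero)
  have ec: "qpow (d i * sum_list (map (C i) (j # w))) = c * e"
    unfolding c_def e_def by (simp add: distrib_left qpow_add)
  have eq: "ncdiff (ncdiff (ncmul F (ncmul X B)) (ncsmult (c * e) (ncmul (ncmul X B) F)))
          (ncsmult \<gamma> (ncadd (if i = j then B else (\<lambda>_. 0)) (ncsmult c (ncmul X E)))) =
        ncadd (ncmul rel B) (ncsmult c (ncmul X (ncdiff (ncdiff (ncmul F B) (ncsmult e (ncmul B F))) (ncsmult \<gamma> E))))"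
    unfolding rel_def F_def X_def
    by (simp only: ncmul_diff_left ncmul_diff_right ncmul_smult_left ncmul_smult_right
          ncmul_assoc_letter_left ncmul_one_left)
       (cases "i = j"; simp add: fun_eq_iff ncdiff_def ncadd_def ncsmult_def algebra_simps)
  show ?case
    unfolding Bc Ec ec F_def[symmetric] \<gamma>_def[symmetric] eq
    using m1 m2 unfolding boson_ideal_def by (rule ideal_gen.add)
qed



lemma word_ii:
  fixes C :: "'i \<Rightarrow> 'i \<Rightarrow> int" and d :: "'i \<Rightarrow> int" and i :: 'i
  assumes sym: "\<And>a b. d a * C a b = d b * C b a"
  defines "g \<equiv> (\<lambda>v s. qpow (d i * sum_list (map (C i) (drop s v))))"
  shows "ncdiff (ncdiff (ncmul (emb (k-1) (ncmono w)) (letter (i, k)))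
            (ncsmult (qpow (d i * sum_list (map (C i) w))) (ncmul (letter (i, k)) (emb (k-1) (ncmono w)))))
          (ncsmult (1 - qpow (2 * d i)) (emb (k-1) (Dgen g i (ncmono w)))) \<in> boson_ideal C d"
proof (induction w rule: rev_induct)
  case Nil
  show ?case unfolding boson_ideal_def
    by (rule ideal_zero') (simp add: ncmono_Nil emb_one Dgen_one emb_zero ncmul_one_left ncmul_one_right ncdiff_def ncsmult_def fun_eq_iff)
next
  case (snoc j w)
  define F where "F = letter (i, k)"
  define X where "X = letter (j, k-1)"
  define B where "B = emb (k-1) (ncmono w)"
  define E where "E = emb (k-1) (Dgen g i (ncmono w))"
  define c where "c = qpow (d i * C i j)"
  define e where "e = qpow (d i * sum_list (map (C i) w))"
  define \<gamma> where "\<gamma> = 1 - qpow (2 * d i)"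
  define rel where "rel = ncdiff (ncdiff (ncmul X F) (ncsmult c (ncmul F X))) (ncsmult (if i = j then \<gamma> else 0) ncone)"
  have rel: "rel \<in> boson_ideal C d"
  proof -
    have kk: "k - 1 + 1 = k" by simp
    have "rel = ncdiff (ncdiff (ncmul (letter (j, k-1)) (letter (i, k - 1 + 1)))
       (ncsmult (qpow (d j * C j i)) (ncmul (letter (i, k - 1 + 1)) (letter (j, k-1)))))
       (ncsmult (if j = i then 1 - qpow (2 * d j) else 0) ncone)"
      unfolding rel_def kk F_def X_def c_def \<gamma>_def using sym[of i j] by auto
    hence "rel \<in> boson_rel_adj C d" unfolding boson_rel_adj_def by blast
    thus ?thesis unfolding boson_ideal_def by (blast intro: ideal_gen.gen)
  qed
  have IH: "ncdiff (ncdiff (ncmul B F) (ncsmult e (ncmul F B))) (ncsmult \<gamma> E) \<in> boson_ideal C d"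
    using snoc.IH unfolding F_def B_def e_def \<gamma>_def E_def .
  have fB: "fin_supp B" unfolding B_def by (intro fin_supp_emb fin_supp_ncmono)
  have m1: "ncmul B rel \<in> boson_ideal C d"
    using rel fB unfolding boson_ideal_def by (rule ideal_gen.left)
  have m2: "ncsmult c (ncmul (ncdiff (ncdiff (ncmul B F) (ncsmult e (ncmul F B))) (ncsmult \<gamma> E)) X) \<in> boson_ideal C d"
    using IH fin_supp_letter unfolding boson_ideal_def X_def by (intro ideal_smult ideal_gen.right)
  have Bc: "emb (k-1) (ncmono (w @ [j])) = ncmul B X"
    unfolding B_def X_def by (simp add: ncmono_snoc emb_mul emb_letter)
  have Ec: "emb (k-1) (Dgen g i (ncmono (w @ [j]))) = ncadd (if i = j then B else (\<lambda>_. 0)) (ncsmult c (ncmul E X))"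
    unfolding B_def X_def E_def c_def g_def D2_snoc
    by (cases "i = j") (simp_all add: emb_add emb_smult emb_mul emb_letter emb_zero)
  have ec: "qpow (d i * sum_list (map (C i) (w @ [j]))) = c * e"
    unfolding c_def e_def by (simp add: distrib_left qpow_add mult.commute)
  have eq: "ncdiff (ncdiff (ncmul (ncmul B X) F) (ncsmult (c * e) (ncmul F (ncmul B X))))
          (ncsmult \<gamma> (ncadd (if i = j then B else (\<lambda>_. 0)) (ncsmult c (ncmul E X)))) =
        ncadd (ncmul B rel) (ncsmult c (ncmul (ncdiff (ncdiff (ncmul B F) (ncsmult e (ncmul F B))) (ncsmult \<gamma> E)) X))"
    unfolding rel_def F_def X_def
    by (simp only: ncmul_diff_left ncmul_diff_right ncmul_smult_left ncmul_smult_right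
          ncmul_assoc_letter_right ncmul_one_right)
       (cases "i = j"; simp add: fun_eq_iff ncdiff_def ncadd_def ncsmult_def algebra_simps)
  show ?case
    unfolding Bc Ec ec F_def[symmetric] \<gamma>_def[symmetric] eq
    using m1 m2 unfolding boson_ideal_def by (rule ideal_gen.add)
qed



lemma sumlist_content:
  fixes C :: "'i::finite \<Rightarrow> 'i \<Rightarrow> int"
  shows "sum_list (map (C i) w) = (\<Sum>b\<in>UNIV. word_content w b * C i b)"
proof (induction w)
  case Nil thus ?case by (simp add: word_content_def)
next
  case (Cons a w)
  have "(\<Sum>b\<in>UNIV. word_content (a # w) b * C i b) = (\<Sum>b\<in>UNIV. (if b = a then C i a else 0) + word_content w b * C i b)"
    by (rule sum.cong) (auto simp: word_content_def algebra_simps)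
  also have "\<dots> = C i a + (\<Sum>b\<in>UNIV. word_content w b * C i b)"
    by (simp add: sum.distrib)
  finally show ?case using Cons by simp
qed

lemma neg1pow_succ: "neg1pow (n + 1) = - neg1pow n"
  by (simp add: neg1pow_def)

lemma bil_layer:
  fixes C :: "'i::finite \<Rightarrow> 'i \<Rightarrow> int"
  assumes "neg1pow (k + 1) * neg1pow (m + 1) = -1"
  shows "- bil C d (wt_layer k (simple_root i)) (wt_layer m \<beta>) = d i * (\<Sum>b\<in>UNIV. \<beta> b * C i b)"
proof -
  have "bil C d (wt_layer k (simple_root i)) (wt_layer m \<beta>) =
      (\<Sum>a\<in>UNIV. if a = i then (\<Sum>b\<in>UNIV. (neg1pow (k + 1) * neg1pow (m + 1)) * (\<beta> b * d i * C i b)) else 0)"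
    unfolding bil_def wt_layer_def simple_root_def
    by (rule sum.cong) (auto simp: algebra_simps)
  also have "\<dots> = - (\<Sum>b\<in>UNIV. \<beta> b * d i * C i b)"
    using assms by (simp add: sum_negf)
  finally show ?thesis by (simp add: sum_distrib_left algebra_simps)
qed



lemma ncmul_scal_right: "ncmul R (\<lambda>x. c * P x) = (\<lambda>x. c * ncmul R P x)"
  using ncmul_smult_right[of R c P] by (simp add: ncsmult_def)
lemma ncmul_scal_left: "ncmul (\<lambda>x. c * P x) R = (\<lambda>x. c * ncmul P R x)"
  using ncmul_smult_left[of c P R] by (simp add: ncsmult_def)

lemma neg1pow_sq: "neg1pow n * neg1pow n = 1"
  by (simp add: neg1pow_def)

lemma content_sum:
  fixes C :: "'i::finite \<Rightarrow> 'i \<Rightarrow> int"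
  assumes "homog_content u \<beta>" "u w \<noteq> 0"
  shows "sum_list (map (C i) w) = (\<Sum>b\<in>UNIV. \<beta> b * C i b)"
  using assms unfolding homog_content_def by (simp add: sumlist_content)

lemma part_i:
  fixes C :: "'i::finite \<Rightarrow> 'i \<Rightarrow> int" and d :: "'i \<Rightarrow> int"
  assumes fu: "fin_supp u" and hu: "homog_content u \<beta>" and su: "estar C d i u \<in> serre_ideal C d"
  shows "boson_eq C d (ncmul (letter (i, k)) (emb (k + 1) u))
              (ncsmult (qpow (- bil C d (wt_layer k (simple_root i)) (wt_layer (k + 1) \<beta>)))
                 (ncmul (emb (k + 1) u) (letter (i, k))))"
proof -
  define g where "g = (\<lambda>v s. qpow (d i * sum_list (map (C i) (take s v))))"
  define S where "S = {w. u w \<noteq> 0}"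
  define N where "N = (\<Sum>b\<in>UNIV. \<beta> b * C i b)"
  define Q where "Q = qpow (d i * N)"
  define \<gamma> where "\<gamma> = 1 - qpow (2 * d i)"
  define F where "F = letter (i, k)"
  define B where "B = (\<lambda>w::'i list. emb (k+1) (ncmono w))"
  define E where "E = (\<lambda>w. emb (k+1) (Dgen g i (ncmono w)))"
  define L where "L = (\<lambda>w. ncdiff (ncdiff (ncmul F (B w)) (ncsmult (qpow (d i * sum_list (map (C i) w))) (ncmul (B w) F))) (ncsmult \<gamma> (E w)))"
  have fS: "finite S" using fu unfolding fin_supp_def S_def .
  have eS: "\<And>w. w \<in> S \<Longrightarrow> qpow (d i * sum_list (map (C i) w)) = Q"
    unfolding Q_def N_def S_def using content_sum[OF hu] by simp
  have bilQ: "qpow (- bil C d (wt_layer k (simple_root i)) (wt_layer (k + 1) \<beta>)) = Q"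
  proof -
    have "neg1pow (k + 1) * neg1pow (k + 1 + 1) = -1"
      using neg1pow_sq[of "k+1"] neg1pow_succ[of "k+1"] by (metis mult_minus_right)
    thus ?thesis unfolding Q_def N_def by (simp add: bil_layer)
  qed
  have sumL: "(\<lambda>x. \<Sum>w\<in>S. u w * L w x) \<in> boson_ideal C d"
    using fS word_i[where C=C and d=d and i=i and k=k, folded g_def] unfolding boson_ideal_def L_def F_def B_def E_def \<gamma>_def
    by (intro ideal_sum) auto
  have embu: "emb (k+1) u = (\<lambda>x. \<Sum>w\<in>S. u w * B w x)"
  proof -
    have "emb (k+1) u = emb (k+1) (\<lambda>x. \<Sum>w\<in>S. u w * ncmono w x)"
      using decomp[OF fS, of u] unfolding S_def by simp
    thus ?thesis by (simp add: emb_sum B_def)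
  qed
  have embD: "emb (k+1) (Dgen g i u) = (\<lambda>x. \<Sum>w\<in>S. u w * E w x)"
  proof -
    have "emb (k+1) (Dgen g i u) = emb (k+1) (Dgen g i (\<lambda>x. \<Sum>w\<in>S. u w * ncmono w x))"
      using decomp[OF fS, of u] unfolding S_def by simp
    thus ?thesis by (simp add: emb_sum Dgen_sum E_def)
  qed
  have Dest: "Dgen g i u = ncsmult (qpow (d i * (N - C i i))) (estar C d i u)"
  proof (rule ext)
    fix v
    have "Dgen g i u v = (\<Sum>s\<le>length v. qpow (d i * (N - C i i)) * (u (take s v @ i # drop s v) * qpow (d i * - sum_list (map (C i) (drop s v)))))"
      unfolding Dgen_def g_def
    proof (rule sum.cong[OF refl])
      fix s
      show "u (take s v @ i # drop s v) * qpow (d i * sum_list (map (C i) (take s v))) =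
         qpow (d i * (N - C i i)) * (u (take s v @ i # drop s v) * qpow (d i * - sum_list (map (C i) (drop s v))))"
      proof (cases "u (take s v @ i # drop s v) = 0")
        case False
        have "sum_list (map (C i) (take s v @ i # drop s v)) = N"
          using content_sum[OF hu False] unfolding N_def .
        hence "sum_list (map (C i) (take s v)) = (N - C i i) + - sum_list (map (C i) (drop s v))"
          by simp
        hence "d i * sum_list (map (C i) (take s v)) = d i * (N - C i i) + d i * - sum_list (map (C i) (drop s v))"
          by (simp add: right_diff_distrib)
        hence "qpow (d i * sum_list (map (C i) (take s v))) = qpow (d i * (N - C i i)) * qpow (d i * - sum_list (map (C i) (drop s v)))"
          by (simp only: qpow_add)
        thus ?thesis by simp
      qed simp
    qed
    thus "Dgen g i u v = ncsmult (qpow (d i * (N - C i i))) (estar C d i u) v"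
      by (simp add: ncsmult_def estar_def sum_distrib_left)
  qed
  have Dmem: "emb (k+1) (Dgen g i u) \<in> boson_ideal C d"
    unfolding Dest using su unfolding serre_ideal_def
    by (intro emb_ideal[unfolded serre_ideal_def] ideal_smult)
  have main: "ncdiff (ncmul F (emb (k+1) u)) (ncsmult Q (ncmul (emb (k+1) u) F)) =
      ncadd (\<lambda>x. \<Sum>w\<in>S. u w * L w x) (ncsmult \<gamma> (emb (k+1) (Dgen g i u)))"
  proof (rule ext)
    fix x
    have "(\<Sum>w\<in>S. u w * L w x) = (\<Sum>w\<in>S. u w * ncmul F (B w) x - Q * (u w * ncmul (B w) F x) - \<gamma> * (u w * E w x))"
      by (rule sum.cong[OF refl]) (simp add: L_def eS ncdiff_def ncsmult_def algebra_simps)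
    thus "ncdiff (ncmul F (emb (k+1) u)) (ncsmult Q (ncmul (emb (k+1) u) F)) x =
      ncadd (\<lambda>x. \<Sum>w\<in>S. u w * L w x) (ncsmult \<gamma> (emb (k+1) (Dgen g i u))) x"
      unfolding embu embD
      by (simp add: ncmul_sum_right ncmul_sum_left ncmul_scal_right ncmul_scal_left ncdiff_def ncadd_def ncsmult_def
            sum_subtractf sum_distrib_left)
  qed
  show ?thesis
    unfolding boson_eq_def bilQ F_def[symmetric] main
    using sumL Dmem unfolding boson_ideal_def by (intro ideal_gen.add ideal_smult)
qed

lemma part_ii:
  fixes C :: "'i::finite \<Rightarrow> 'i \<Rightarrow> int" and d :: "'i \<Rightarrow> int"
  assumes fu: "fin_supp u" and sym: "\<And>a b. d a * C a b = d b * C b a" and hu: "homog_content u \<beta>" and su: "eprime C d i u \<in> serre_ideal C d"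
  shows "boson_eq C d (ncmul (emb (k - 1) u) (letter (i, k)))
              (ncsmult (qpow (- bil C d (wt_layer k (simple_root i)) (wt_layer (k - 1) \<beta>)))
                 (ncmul (letter (i, k)) (emb (k - 1) u)))"
proof -
  define g where "g = (\<lambda>v s. qpow (d i * sum_list (map (C i) (drop s v))))"
  define S where "S = {w. u w \<noteq> 0}"
  define N where "N = (\<Sum>b\<in>UNIV. \<beta> b * C i b)"
  define Q where "Q = qpow (d i * N)"
  define \<gamma> where "\<gamma> = 1 - qpow (2 * d i)"
  define F where "F = letter (i, k)"
  define B where "B = (\<lambda>w::'i list. emb (k-1) (ncmono w))"
  define E where "E = (\<lambda>w. emb (k-1) (Dgen g i (ncmono w)))"
  define L where "L = (\<lambda>w. ncdiff (ncdiff (ncmul (B w) F) (ncsmult (qpow (d i * sum_list (map (C i) w))) (ncmul F (B w)))) (ncsmult \<gamma> (E w)))"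
  have fS: "finite S" using fu unfolding fin_supp_def S_def .
  have eS: "\<And>w. w \<in> S \<Longrightarrow> qpow (d i * sum_list (map (C i) w)) = Q"
    unfolding Q_def N_def S_def using content_sum[OF hu] by simp
  have bilQ: "qpow (- bil C d (wt_layer k (simple_root i)) (wt_layer (k - 1) \<beta>)) = Q"
  proof -
    have "neg1pow (k + 1) * neg1pow (k - 1 + 1) = -1"
      using neg1pow_sq[of "k"] neg1pow_succ[of "k"] by simp
    thus ?thesis unfolding Q_def N_def by (simp add: bil_layer)
  qed
  have sumL: "(\<lambda>x. \<Sum>w\<in>S. u w * L w x) \<in> boson_ideal C d"
    using fS word_ii[where C=C and d=d and i=i and k=k, OF sym, folded g_def] unfolding boson_ideal_def L_def F_def B_def E_def \<gamma>_def
    by (intro ideal_sum) auto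
  have embu: "emb (k-1) u = (\<lambda>x. \<Sum>w\<in>S. u w * B w x)"
  proof -
    have "emb (k-1) u = emb (k-1) (\<lambda>x. \<Sum>w\<in>S. u w * ncmono w x)"
      using decomp[OF fS, of u] unfolding S_def by simp
    thus ?thesis by (simp add: emb_sum B_def)
  qed
  have embD: "emb (k-1) (Dgen g i u) = (\<lambda>x. \<Sum>w\<in>S. u w * E w x)"
  proof -
    have "emb (k-1) (Dgen g i u) = emb (k-1) (Dgen g i (\<lambda>x. \<Sum>w\<in>S. u w * ncmono w x))"
      using decomp[OF fS, of u] unfolding S_def by simp
    thus ?thesis by (simp add: emb_sum Dgen_sum E_def)
  qed
  have Dest: "Dgen g i u = ncsmult (qpow (d i * (N - C i i))) (eprime C d i u)"
  proof (rule ext)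
    fix v
    have "Dgen g i u v = (\<Sum>s\<le>length v. qpow (d i * (N - C i i)) * (u (take s v @ i # drop s v) * qpow (d i * - sum_list (map (C i) (take s v)))))"
      unfolding Dgen_def g_def
    proof (rule sum.cong[OF refl])
      fix s
      show "u (take s v @ i # drop s v) * qpow (d i * sum_list (map (C i) (drop s v))) =
         qpow (d i * (N - C i i)) * (u (take s v @ i # drop s v) * qpow (d i * - sum_list (map (C i) (take s v))))"
      proof (cases "u (take s v @ i # drop s v) = 0")
        case False
        have "sum_list (map (C i) (take s v @ i # drop s v)) = N"
          using content_sum[OF hu False] unfolding N_def .
        hence "sum_list (map (C i) (drop s v)) = (N - C i i) + - sum_list (map (C i) (take s v))"
          by simp
        hence "d i * sum_list (map (C i) (drop s v)) = d i * (N - C i i) + d i * - sum_list (map (C i) (take s v))"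
          by (simp add: right_diff_distrib)
        hence "qpow (d i * sum_list (map (C i) (drop s v))) = qpow (d i * (N - C i i)) * qpow (d i * - sum_list (map (C i) (take s v)))"
          by (simp only: qpow_add)
        thus ?thesis by simp
      qed simp
    qed
    thus "Dgen g i u v = ncsmult (qpow (d i * (N - C i i))) (eprime C d i u) v"
      by (simp add: ncsmult_def eprime_def sum_distrib_left)
  qed
  have Dmem: "emb (k-1) (Dgen g i u) \<in> boson_ideal C d"
    unfolding Dest using su unfolding serre_ideal_def
    by (intro emb_ideal[unfolded serre_ideal_def] ideal_smult)
  have main: "ncdiff (ncmul (emb (k-1) u) F) (ncsmult Q (ncmul F (emb (k-1) u))) =
      ncadd (\<lambda>x. \<Sum>w\<in>S. u w * L w x) (ncsmult \<gamma> (emb (k-1) (Dgen g i u)))"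
  proof (rule ext)
    fix x
    have "(\<Sum>w\<in>S. u w * L w x) = (\<Sum>w\<in>S. u w * ncmul (B w) F x - Q * (u w * ncmul F (B w) x) - \<gamma> * (u w * E w x))"
      by (rule sum.cong[OF refl]) (simp add: L_def eS ncdiff_def ncsmult_def algebra_simps)
    thus "ncdiff (ncmul (emb (k-1) u) F) (ncsmult Q (ncmul F (emb (k-1) u))) x =
      ncadd (\<lambda>x. \<Sum>w\<in>S. u w * L w x) (ncsmult \<gamma> (emb (k-1) (Dgen g i u))) x"
      unfolding embu embD
      by (simp add: ncmul_sum_right ncmul_sum_left ncmul_scal_right ncmul_scal_left ncdiff_def ncadd_def ncsmult_def
            sum_subtractf sum_distrib_left)
  qed
  show ?thesis
    unfolding boson_eq_def bilQ F_def[symmetric] main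
    using sumL Dmem unfolding boson_ideal_def by (intro ideal_gen.add ideal_smult)
qed


theorem lemma6p2:
  fixes C :: "'i::finite \<Rightarrow> 'i \<Rightarrow> int" and d :: "'i \<Rightarrow> int"
  assumes "finite_type_cartan C d"
  shows "(\<forall>(i::'i) (k::int) (u::'i ncpoly) \<beta>.
            fin_supp u \<and> homog_content u \<beta> \<and> estar C d i u \<in> serre_ideal C d \<longrightarrow>
            boson_eq C d (ncmul (letter (i, k)) (emb (k + 1) u))
              (ncsmult (qpow (- bil C d (wt_layer k (simple_root i)) (wt_layer (k + 1) \<beta>)))
                 (ncmul (emb (k + 1) u) (letter (i, k)))))
       \<and> (\<forall>(i::'i) (k::int) (v::'i ncpoly) \<beta>.
            fin_supp v \<and> homog_content v \<beta> \<and> eprime C d i v \<in> serre_ideal C d \<longrightarrow>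
            boson_eq C d (ncmul (emb (k - 1) v) (letter (i, k)))
              (ncsmult (qpow (- bil C d (wt_layer k (simple_root i)) (wt_layer (k - 1) \<beta>)))
                 (ncmul (letter (i, k)) (emb (k - 1) v))))"
proof -
  have sym0: "\<forall>a b. d a * C a b = d b * C b a"
    using assms unfolding finite_type_cartan_def by (elim conjE)
  have sym: "\<And>a b. d a * C a b = d b * C b a"
    using sym0 by simp
  show ?thesis
  proof (intro conjI allI impI)
    fix i k u \<beta>
    assume h: "fin_supp u \<and> homog_content u \<beta> \<and> estar C d i u \<in> serre_ideal C d"
    show "boson_eq C d (ncmul (letter (i, k)) (emb (k + 1) u))
              (ncsmult (qpow (- bil C d (wt_layer k (simple_root i)) (wt_layer (k + 1) \<beta>)))
                 (ncmul (emb (k + 1) u) (letter (i, k))))"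
      by (rule part_i[OF conjunct1[OF h] conjunct1[OF conjunct2[OF h]] conjunct2[OF conjunct2[OF h]]])
  next
    fix i k v \<beta>
    assume h: "fin_supp v \<and> homog_content v \<beta> \<and> eprime C d i v \<in> serre_ideal C d"
    show "boson_eq C d (ncmul (emb (k - 1) v) (letter (i, k)))
              (ncsmult (qpow (- bil C d (wt_layer k (simple_root i)) (wt_layer (k - 1) \<beta>)))
                 (ncmul (letter (i, k)) (emb (k - 1) v)))"
      by (rule part_ii[OF conjunct1[OF h] sym conjunct1[OF conjunct2[OF h]] conjunct2[OF conjunct2[OF h]]])
  qed
qed

end
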